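(* Let $m\ge1$ and let $\pi\in\mathfrak{S}_{3m}$ avoid $132$ and consist only of $3$-cycles, with element sets $\{a_i<b_i<c_i\}$, $i=1,\dots,m$, indexed so that $b_1<\dots<b_m$. Let $A=\{a_i\}$, $B=\{b_i\}$, let $D_\pi$ be the associated Dyck word and $X=(x_1,\dots,x_k)$ its free composition. Write $A=\bigcup_{j=1}^k A_j$ and $B=\bigcup_{j=1}^k B_j$, where the $A_j$ are consecutive (in the increasing order of $A$) subsets with every element of $A_j$ less than every element of $A_{j+1}$ and $|A_j|=x_{k-j+1}$, and the $B_j$ are consecutive subsets with every element of $B_j$ less than every element of $B_{j+1}$ and $|B_j|=x_j$. Then for every $i$ and $j$, if $b_i\in B_j$ then $a_i\in A_{k-j+1}$.
   Context: A permutation avoids $132$ if there are no indices $i<j<k$ with $\pi_i<\pi_k<\pi_j$. With $C=\{c_i\}$, the associated Dyck word $D_\pi$ is the word of length $2m$ obtained by listing the elements of $B\cup C$ in increasing order and writing $0$ for each element of $B$ and $1$ for each element of $C$. For a Dyck word $D$ of semilength $m$: indices $i,i+1$ are linked if the $i$-th and $(i+1)$-st $0$ of $D$ occupy adjacent positions and the $i$-th and $(i+1)$-st $1$ occupy adjacent positions; the free blocks are the maximal intervals of $\{1,\dots,m\}$ in which all consecutive indices are linked; the free composition $(x_1,\dots,x_k)$ lists the sizes of the free blocks from left to right. *)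

theory Defs
  imports "HOL-Combinatorics.Permutations"
begin

definition avoids132 :: "(nat \<Rightarrow> nat) \<Rightarrow> nat \<Rightarrow> bool" where
  "avoids132 p n \<longleftrightarrow>
     (\<forall>i j k. 1 \<le> i \<and> i < j \<and> j < k \<and> k \<le> n \<longrightarrow> \<not> (p i < p k \<and> p k < p j))"

definition only_3cycles :: "(nat \<Rightarrow> nat) \<Rightarrow> nat \<Rightarrow> bool" where
  "only_3cycles p n \<longleftrightarrow> (\<forall>x\<in>{1..n}. p x \<noteq> x \<and> (p ^^ 3) x = x)"

definition cyc :: "(nat \<Rightarrow> nat) \<Rightarrow> nat \<Rightarrow> nat set" where
  "cyc p x = {x, p x, p (p x)}"

definition setA :: "(nat \<Rightarrow> nat) \<Rightarrow> nat \<Rightarrow> nat set" where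
  "setA p n = {x\<in>{1..n}. x = Min (cyc p x)}"

definition setC :: "(nat \<Rightarrow> nat) \<Rightarrow> nat \<Rightarrow> nat set" where
  "setC p n = {x\<in>{1..n}. x = Max (cyc p x)}"

definition setB :: "(nat \<Rightarrow> nat) \<Rightarrow> nat \<Rightarrow> nat set" where
  "setB p n = {x\<in>{1..n}. x \<noteq> Min (cyc p x) \<and> x \<noteq> Max (cyc p x)}"

definition dyck_word :: "(nat \<Rightarrow> nat) \<Rightarrow> nat \<Rightarrow> nat list" where
  "dyck_word p n = map (\<lambda>y. if y \<in> setC p n then 1 else 0)
                     (sorted_list_of_set (setB p n \<union> setC p n))"

text \<open>0-based positions of the letter c in D; the i-th (1-based) occurrence is at index i-1.\<close>
definition letter_pos :: "nat \<Rightarrow> nat list \<Rightarrow> nat list" where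
  "letter_pos c D = filter (\<lambda>q. D ! q = c) [0..<length D]"

text \<open>Indices i, i+1 (1-based) are linked.\<close>
definition linked :: "nat list \<Rightarrow> nat \<Rightarrow> bool" where
  "linked D i \<longleftrightarrow>
     letter_pos 0 D ! i = letter_pos 0 D ! (i - 1) + 1 \<and>
     letter_pos 1 D ! i = letter_pos 1 D ! (i - 1) + 1"

definition free_blocks :: "nat list \<Rightarrow> nat \<Rightarrow> nat set set" where
  "free_blocks D m = {{l..r} | l r. 1 \<le> l \<and> l \<le> r \<and> r \<le> m \<and>
       (\<forall>i. l \<le> i \<and> i < r \<longrightarrow> linked D i) \<and>
       (1 < l \<longrightarrow> \<not> linked D (l - 1)) \<and>
       (r < m \<longrightarrow> \<not> linked D r)}"

definition free_composition :: "nat list \<Rightarrow> nat \<Rightarrow> nat list" where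
  "free_composition D m =
     map (\<lambda>l. card (THE S. S \<in> free_blocks D m \<and> Min S = l))
         (sorted_list_of_set (Min ` free_blocks D m))"

definition block :: "nat set \<Rightarrow> nat list \<Rightarrow> nat \<Rightarrow> nat set" where
  "block S sz j = {sorted_list_of_set S ! r | r.
       sum_list (take (j - 1) sz) \<le> r \<and> r < sum_list (take j sz)}"

end

theory Submission
  imports Defs
begin

definition cy :: "(nat \<Rightarrow> nat) \<Rightarrow> nat \<Rightarrow> nat \<Rightarrow> nat \<Rightarrow> bool" where
  "cy p a b c \<longleftrightarrow> a < b \<and> b < c \<and>
     ((p a = b \<and> p b = c \<and> p c = a) \<or> (p a = c \<and> p c = b \<and> p b = a))"

lemma av_inst:
  "avoids132 p n \<Longrightarrow> 1 \<le> i \<longrightarrow> i < j \<longrightarrow> j < k \<longrightarrow> k \<le> n \<longrightarrow> \<not> (p i < p k \<and> p k < p j)"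
  unfolding avoids132_def by blast

lemma P1:
  assumes av: "avoids132 p n" and X: "cy p a b c" and Y: "cy p a2 b2 c2"
    and r: "1 \<le> a" "c \<le> n" "1 \<le> a2" "c2 \<le> n"
    and d: "distinct [a,b,c,a2,b2,c2]" and h: "a < a2"
  shows "a2 < b"
proof -
  note i1 = av_inst[OF av, of a a2 c2] av_inst[OF av, of b a2 c2]
  show ?thesis using X Y r d[simplified] h i1 unfolding cy_def by (elim conjE disjE; simp; linarith?)
qed

lemma P2a:
  assumes av: "avoids132 p n" and X: "cy p a b c" and Y: "cy p a2 b2 c2"
    and r:"1 \<le> a" "c \<le> n" "1 \<le> a2" "c2 \<le> n"
    and d: "distinct [a,b,c,a2,b2,c2]" and h: "a < a2" "b < b2"
  shows "c < c2"
proof -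
  note i1 = av_inst[OF av, of a b b2] av_inst[OF av, of a b c2] av_inst[OF av, of b b2 c] av_inst[OF av, of b c2 c]
  show ?thesis using X Y r d[simplified] h i1 unfolding cy_def by (elim conjE disjE; simp; linarith?)
qed

lemma P2b:
  assumes av: "avoids132 p n" and X: "cy p a b c" and Y: "cy p a2 b2 c2"
    and r:"1 \<le> a" "c \<le> n" "1 \<le> a2" "c2 \<le> n"
    and d: "distinct [a,b,c,a2,b2,c2]" and h: "a < a2" "b2 < b"
  shows "c2 < c"
proof -
  note i1 = av_inst[OF av, of a a2 b] av_inst[OF av, of a b2 b] av_inst[OF av, of b c c2]
  show ?thesis using X Y r d[simplified] h i1 unfolding cy_def by (elim conjE disjE; simp; linarith?)
qed

lemma P3:
  assumes av: "avoids132 p n" and X: "cy p a b c" and Y: "cy p a2 b2 c2"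
    and r:"1 \<le> a" "c \<le> n" "1 \<le> a2" "c2 \<le> n"
    and d: "distinct [a,b,c,a2,b2,c2]" and h: "a < a2" "b < b2"
  shows "b2 < c"
proof -
  note i1 = av_inst[OF av, of a a2 c2] av_inst[OF av, of b b2 c2] av_inst[OF av, of c b2 c2]
  show ?thesis using X Y r d[simplified] h i1 unfolding cy_def by (elim conjE disjE; simp; linarith?)
qed

lemma P4i:
  assumes av: "avoids132 p n" and X: "cy p a b c" and Y: "cy p a2 b2 c2" and Z: "cy p a3 b3 c3"
    and r:"1 \<le> a" "c \<le> n" "1 \<le> a2" "c2 \<le> n" "1 \<le> a3" "c3 \<le> n"
    and d: "distinct [a,b,c,a2,b2,c2,a3,b3,c3]" and h: "a < a2" "b < b2"
  shows "\<not> (b < c3 \<and> c3 < b2)"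
proof
  assume nc: "b < c3 \<and> c3 < b2"
  have o: "a < b" "b < c" "a2 < b2" "b2 < c2" "a3 < b3" "b3 < c3" using X Y Z unfolding cy_def by auto
  show False proof (cases "p a = b")
    case u0: True
    show False proof (cases "p a2 = b2")
      case u1: True
      show False proof (cases "p a3 = b3")
        case u2: True
        have e: "p a = b" "p b = c" "p c = a" "p a2 = b2" "p b2 = c2" "p c2 = a2" "p a3 = b3" "p b3 = c3" "p c3 = a3" using X Y Z u2 u1 u0 unfolding cy_def by auto
        have dd: "a \<noteq> a2" "a2 \<noteq> a3" "a2 \<noteq> b3" "b \<noteq> c3" "b2 \<noteq> c3" using d by auto
        have ins: "\<not> (c3 < b2 \<and> b2 < c2 \<and> a3 < a2 \<and> a2 < c2)" "\<not> (a < a2 \<and> a2 < b3 \<and> b < c3 \<and> c3 < b2)" using av_inst[OF av, of c3 b2 c2] av_inst[OF av, of a a2 b3] e o r by auto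
        show False using ins dd o r h nc by auto
      next
        case u2: False
        have e: "p a = b" "p b = c" "p c = a" "p a2 = b2" "p b2 = c2" "p c2 = a2" "p a3 = c3" "p b3 = a3" "p c3 = b3" using X Y Z u2 u1 u0 unfolding cy_def by auto
        have dd: "a \<noteq> a2" "a2 \<noteq> a3" "b \<noteq> c3" "b2 \<noteq> b3" "b2 \<noteq> c3" using d by auto
        have ins: "\<not> (b3 < b2 \<and> b2 < c2 \<and> a3 < a2 \<and> a2 < c2)" "\<not> (a < a2 \<and> a2 < a3 \<and> b < c3 \<and> c3 < b2)" using av_inst[OF av, of b3 b2 c2] av_inst[OF av, of a a2 a3] e o r by auto
        show False using ins dd o r h nc by auto
      qed
    next
      case u1: False
      show False proof (cases "p a3 = b3")
        case u2: True
        have e: "p a = b" "p b = c" "p c = a" "p a2 = c2" "p b2 = a2" "p c2 = b2" "p a3 = b3" "p b3 = c3" "p c3 = a3" using X Y Z u2 u1 u0 unfolding cy_def by auto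
        have dd: "a \<noteq> a2" "b \<noteq> b2" using d by auto
        have ins: "\<not> (a < a2 \<and> a2 < c2 \<and> b < b2 \<and> b2 < c2)" using av_inst[OF av, of a a2 c2] e o r by auto
        show False using ins dd o r h nc by auto
      next
        case u2: False
        have e: "p a = b" "p b = c" "p c = a" "p a2 = c2" "p b2 = a2" "p c2 = b2" "p a3 = c3" "p b3 = a3" "p c3 = b3" using X Y Z u2 u1 u0 unfolding cy_def by auto
        have dd: "a \<noteq> a2" "b \<noteq> b2" using d by auto
        have ins: "\<not> (a < a2 \<and> a2 < c2 \<and> b < b2 \<and> b2 < c2)" using av_inst[OF av, of a a2 c2] e o r by auto
        show False using ins dd o r h nc by auto
      qed
    qed
  next
    case u0: False
    show False proof (cases "p a2 = b2")
      case u1: True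
      show False proof (cases "p a3 = b3")
        case u2: True
        have e: "p a = c" "p b = a" "p c = b" "p a2 = b2" "p b2 = c2" "p c2 = a2" "p a3 = b3" "p b3 = c3" "p c3 = a3" using X Y Z u2 u1 u0 unfolding cy_def by auto
        have dd: "a \<noteq> a2" "b \<noteq> b2" using d by auto
        have ins: "\<not> (b < b2 \<and> b2 < c2 \<and> a < a2 \<and> a2 < c2)" using av_inst[OF av, of b b2 c2] e o r by auto
        show False using ins dd o r h nc by auto
      next
        case u2: False
        have e: "p a = c" "p b = a" "p c = b" "p a2 = b2" "p b2 = c2" "p c2 = a2" "p a3 = c3" "p b3 = a3" "p c3 = b3" using X Y Z u2 u1 u0 unfolding cy_def by auto
        have dd: "a \<noteq> a2" "b \<noteq> b2" using d by auto
        have ins: "\<not> (b < b2 \<and> b2 < c2 \<and> a < a2 \<and> a2 < c2)" using av_inst[OF av, of b b2 c2] e o r by auto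
        show False using ins dd o r h nc by auto
      qed
    next
      case u1: False
      show False proof (cases "p a3 = b3")
        case u2: True
        have e: "p a = c" "p b = a" "p c = b" "p a2 = c2" "p b2 = a2" "p c2 = b2" "p a3 = b3" "p b3 = c3" "p c3 = a3" using X Y Z u2 u1 u0 unfolding cy_def by auto
        have dd: "a \<noteq> a2" "a2 \<noteq> a3" "b \<noteq> c3" "b2 \<noteq> b3" "b2 \<noteq> c3" using d by auto
        have ins: "\<not> (a3 < a2 \<and> a2 < c2 \<and> b3 < b2 \<and> b2 < c2)" "\<not> (b < c3 \<and> c3 < b2 \<and> a < a2 \<and> a2 < a3)" using av_inst[OF av, of a3 a2 c2] av_inst[OF av, of b c3 b2] e o r by auto
        show False using ins dd o r h nc by auto
      next
        case u2: False
        have e: "p a = c" "p b = a" "p c = b" "p a2 = c2" "p b2 = a2" "p c2 = b2" "p a3 = c3" "p b3 = a3" "p c3 = b3" using X Y Z u2 u1 u0 unfolding cy_def by auto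
        have dd: "a \<noteq> a2" "a2 \<noteq> a3" "a2 \<noteq> b3" "b \<noteq> c3" "b2 \<noteq> c3" using d by auto
        have ins: "\<not> (a3 < a2 \<and> a2 < c2 \<and> c3 < b2 \<and> b2 < c2)" "\<not> (b < c3 \<and> c3 < b2 \<and> a < a2 \<and> a2 < b3)" using av_inst[OF av, of a3 a2 c2] av_inst[OF av, of b c3 b2] e o r by auto
        show False using ins dd o r h nc by auto
      qed
    qed
  qed
qed

lemma P4ii:
  assumes av: "avoids132 p n" and X: "cy p a b c" and Y: "cy p a2 b2 c2" and Z: "cy p a3 b3 c3"
    and r:"1 \<le> a" "c \<le> n" "1 \<le> a2" "c2 \<le> n" "1 \<le> a3" "c3 \<le> n"
    and d: "distinct [a,b,c,a2,b2,c2,a3,b3,c3]" and h: "a < a2" "b < b2"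
  shows "\<not> (c < b3 \<and> b3 < c2)"
proof
  assume nc: "c < b3 \<and> b3 < c2"
  have o: "a < b" "b < c" "a2 < b2" "b2 < c2" "a3 < b3" "b3 < c3" using X Y Z unfolding cy_def by auto
  show False proof (cases "p a = b")
    case u0: True
    show False proof (cases "p a2 = b2")
      case u1: True
      show False proof (cases "p a3 = b3")
        case u2: True
        have e: "p a = b" "p b = c" "p c = a" "p a2 = b2" "p b2 = c2" "p c2 = a2" "p a3 = b3" "p b3 = c3" "p c3 = a3" using X Y Z u2 u1 u0 unfolding cy_def by auto
        have dd: "a \<noteq> a2" "a2 \<noteq> b" "a2 \<noteq> c3" "b3 \<noteq> c" "b3 \<noteq> c2" using d by auto
        have ins: "\<not> (c < b3 \<and> b3 < c2 \<and> a < a2 \<and> a2 < c3)" "\<not> (a < a2 \<and> a2 < c2 \<and> b < a2 \<and> a2 < b2)" using av_inst[OF av, of c b3 c2] av_inst[OF av, of a a2 c2] e o r by auto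
        show False using ins dd o r h nc by auto
      next
        case u2: False
        have e: "p a = b" "p b = c" "p c = a" "p a2 = b2" "p b2 = c2" "p c2 = a2" "p a3 = c3" "p b3 = a3" "p c3 = b3" using X Y Z u2 u1 u0 unfolding cy_def by auto
        have dd: "a \<noteq> a2" "a \<noteq> b2" "b \<noteq> b3" "b2 \<noteq> c" "b2 \<noteq> c3" "b3 \<noteq> c2" using d by auto
        have ins: "\<not> (a < b2 \<and> b2 < c3 \<and> b < b3 \<and> b3 < c2)" "\<not> (c < b2 \<and> b2 < c2 \<and> a < a2 \<and> a2 < c2)" using av_inst[OF av, of a b2 c3] av_inst[OF av, of c b2 c2] e o r by auto
        show False using ins dd o r h nc by auto
      qed
    next
      case u1: False
      show False proof (cases "p a3 = b3")
        case u2: True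
        have e: "p a = b" "p b = c" "p c = a" "p a2 = c2" "p b2 = a2" "p c2 = b2" "p a3 = b3" "p b3 = c3" "p c3 = a3" using X Y Z u2 u1 u0 unfolding cy_def by auto
        have dd: "a \<noteq> a2" "b \<noteq> b2" using d by auto
        have ins: "\<not> (a < a2 \<and> a2 < c2 \<and> b < b2 \<and> b2 < c2)" using av_inst[OF av, of a a2 c2] e o r by auto
        show False using ins dd o r h nc by auto
      next
        case u2: False
        have e: "p a = b" "p b = c" "p c = a" "p a2 = c2" "p b2 = a2" "p c2 = b2" "p a3 = c3" "p b3 = a3" "p c3 = b3" using X Y Z u2 u1 u0 unfolding cy_def by auto
        have dd: "a \<noteq> a2" "b \<noteq> b2" using d by auto
        have ins: "\<not> (a < a2 \<and> a2 < c2 \<and> b < b2 \<and> b2 < c2)" using av_inst[OF av, of a a2 c2] e o r by auto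
        show False using ins dd o r h nc by auto
      qed
    qed
  next
    case u0: False
    show False proof (cases "p a2 = b2")
      case u1: True
      show False proof (cases "p a3 = b3")
        case u2: True
        have e: "p a = c" "p b = a" "p c = b" "p a2 = b2" "p b2 = c2" "p c2 = a2" "p a3 = b3" "p b3 = c3" "p c3 = a3" using X Y Z u2 u1 u0 unfolding cy_def by auto
        have dd: "a \<noteq> a2" "b \<noteq> b2" using d by auto
        have ins: "\<not> (b < b2 \<and> b2 < c2 \<and> a < a2 \<and> a2 < c2)" using av_inst[OF av, of b b2 c2] e o r by auto
        show False using ins dd o r h nc by auto
      next
        case u2: False
        have e: "p a = c" "p b = a" "p c = b" "p a2 = b2" "p b2 = c2" "p c2 = a2" "p a3 = c3" "p b3 = a3" "p c3 = b3" using X Y Z u2 u1 u0 unfolding cy_def by auto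
        have dd: "a \<noteq> a2" "b \<noteq> b2" using d by auto
        have ins: "\<not> (b < b2 \<and> b2 < c2 \<and> a < a2 \<and> a2 < c2)" using av_inst[OF av, of b b2 c2] e o r by auto
        show False using ins dd o r h nc by auto
      qed
    next
      case u1: False
      show False proof (cases "p a3 = b3")
        case u2: True
        have e: "p a = c" "p b = a" "p c = b" "p a2 = c2" "p b2 = a2" "p c2 = b2" "p a3 = b3" "p b3 = c3" "p c3 = a3" using X Y Z u2 u1 u0 unfolding cy_def by auto
        have dd: "a \<noteq> a2" "b \<noteq> b2" "b2 \<noteq> c" "b2 \<noteq> c3" "b3 \<noteq> c" "b3 \<noteq> c2" using d by auto
        have ins: "\<not> (c < b3 \<and> b3 < c2 \<and> b < b2 \<and> b2 < c3)" "\<not> (a < a2 \<and> a2 < c2 \<and> c < b2 \<and> b2 < c2)" using av_inst[OF av, of c b3 c2] av_inst[OF av, of a a2 c2] e o r by auto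
        show False using ins dd o r h nc by auto
      next
        case u2: False
        have e: "p a = c" "p b = a" "p c = b" "p a2 = c2" "p b2 = a2" "p c2 = b2" "p a3 = c3" "p b3 = a3" "p c3 = b3" using X Y Z u2 u1 u0 unfolding cy_def by auto
        have dd: "a \<noteq> a2" "a2 \<noteq> c3" "b2 \<noteq> c" "b3 \<noteq> c" "b3 \<noteq> c2" using d by auto
        have ins: "\<not> (a < a2 \<and> a2 < c3 \<and> c < b3 \<and> b3 < c2)" "\<not> (a < a2 \<and> a2 < c2 \<and> c < b2 \<and> b2 < c2)" using av_inst[OF av, of a a2 c3] av_inst[OF av, of a a2 c2] e o r by auto
        show False using ins dd o r h nc by auto
      qed
    qed
  qed
qed

definition al :: "(nat \<Rightarrow> nat) \<Rightarrow> nat \<Rightarrow> nat" where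
  "al p x = Min (cyc p x)"
definition be :: "(nat \<Rightarrow> nat) \<Rightarrow> nat \<Rightarrow> nat" where
  "be p x = min (p (al p x)) (p (p (al p x)))"
definition ga :: "(nat \<Rightarrow> nat) \<Rightarrow> nat \<Rightarrow> nat" where
  "ga p x = max (p (al p x)) (p (p (al p x)))"

context
  fixes p :: "nat \<Rightarrow> nat" and n :: nat
  assumes perm: "p permutes {1..n}" and oc: "only_3cycles p n"
begin

lemma p_in: "x \<in> {1..n} \<Longrightarrow> p x \<in> {1..n}"
  using permutes_in_image[OF perm] by blast

lemma p3: "x \<in> {1..n} \<Longrightarrow> p (p (p x)) = x"
  using oc unfolding only_3cycles_def by (simp add: numeral_3_eq_3)

lemma p_neq: "x \<in> {1..n} \<Longrightarrow> p x \<noteq> x"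
  using oc unfolding only_3cycles_def by simp

lemma pp_neq: assumes "x \<in> {1..n}" shows "p (p x) \<noteq> x" "p (p x) \<noteq> p x"
proof -
  show "p (p x) \<noteq> x" using p3[OF assms] p_neq[OF assms] by metis
  show "p (p x) \<noteq> p x" using p_neq[OF p_in[OF assms]] .
qed

lemma cyc_in: "x \<in> {1..n} \<Longrightarrow> cyc p x \<subseteq> {1..n}"
  unfolding cyc_def using p_in by auto

lemma cyc_same: assumes "x \<in> {1..n}" "y \<in> cyc p x" shows "cyc p y = cyc p x"
  using assms p3[OF assms(1)] unfolding cyc_def by auto

lemma al_in: assumes "x \<in> {1..n}" shows "al p x \<in> cyc p x"
  unfolding al_def cyc_def by (rule Min_in) auto

lemma al_range: "x \<in> {1..n} \<Longrightarrow> al p x \<in> {1..n}"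
  using al_in cyc_in by blast

lemma cyc_al: "x \<in> {1..n} \<Longrightarrow> cyc p (al p x) = cyc p x"
  using cyc_same al_in by blast

lemma cy_al: assumes x: "x \<in> {1..n}"
  shows "cy p (al p x) (be p x) (ga p x)" "cyc p x = {al p x, be p x, ga p x}"
proof -
  define a where "a = al p x"
  have ar: "a \<in> {1..n}" using al_range[OF x] a_def by simp
  have ca: "cyc p a = {a, p a, p (p a)}" unfolding cyc_def by simp
  have amin: "a = Min (cyc p a)" using cyc_al[OF x] a_def al_def by simp
  have n1: "p a \<noteq> a" "p (p a) \<noteq> a" "p (p a) \<noteq> p a" using p_neq[OF ar] pp_neq[OF ar] by auto
  have "a \<le> p a" "a \<le> p (p a)" using amin ca by (metis Min_le finite.emptyI finite.insertI insertCI)+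
  hence lt: "a < p a" "a < p (p a)" using n1 by auto
  have e3: "p (p (p a)) = a" using p3[OF ar] .
  have "cy p a (min (p a) (p (p a))) (max (p a) (p (p a)))"
  proof (cases "p a < p (p a)")
    case True
    hence "min (p a) (p (p a)) = p a" "max (p a) (p (p a)) = p (p a)" by auto
    thus ?thesis unfolding cy_def using lt True e3 by simp
  next
    case False
    hence F: "p (p a) < p a" using n1 by auto
    hence "min (p a) (p (p a)) = p (p a)" "max (p a) (p (p a)) = p a" by auto
    thus ?thesis unfolding cy_def using lt F e3 by simp
  qed
  thus "cy p (al p x) (be p x) (ga p x)" unfolding be_def ga_def a_def .
  have "cyc p x = {a, p a, p (p a)}" using cyc_al[OF x] ca a_def by simp
  also have "\<dots> = {a, min (p a) (p (p a)), max (p a) (p (p a))}" by (auto simp: min_def max_def)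
  finally show "cyc p x = {al p x, be p x, ga p x}" unfolding be_def ga_def a_def .
qed

lemma cy_ord: assumes "x \<in> {1..n}" shows "al p x < be p x" "be p x < ga p x"
  using cy_al(1)[OF assms] unfolding cy_def by auto

lemma cy_range: assumes "x \<in> {1..n}" shows "1 \<le> al p x" "ga p x \<le> n" "be p x \<in> {1..n}" "ga p x \<in> {1..n}"
proof -
  have s: "{al p x, be p x, ga p x} \<subseteq> {1..n}" using cy_al(2)[OF assms] cyc_in[OF assms] by simp
  thus "be p x \<in> {1..n}" "ga p x \<in> {1..n}" by simp_all
  thus "ga p x \<le> n" by simp
  show "1 \<le> al p x" using s by simp
qed

lemma same_cyc: assumes "x \<in> {1..n}" "y \<in> {al p x, be p x, ga p x}"
  shows "al p y = al p x" "be p y = be p x" "ga p y = ga p x" "y \<in> {1..n}"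
proof -
  have yc: "y \<in> cyc p x" using assms cy_al(2)[OF assms(1)] by simp
  have "cyc p y = cyc p x" using cyc_same[OF assms(1) yc] .
  thus "al p y = al p x" "be p y = be p x" "ga p y = ga p x" unfolding al_def be_def ga_def by simp_all
  show "y \<in> {1..n}" using yc cyc_in[OF assms(1)] by blast
qed

lemma Max_cyc: assumes "x \<in> {1..n}" shows "Max (cyc p x) = ga p x"
proof -
  have "al p x < be p x" "be p x < ga p x" using cy_ord[OF assms] by auto
  hence "Max {al p x, be p x, ga p x} = ga p x" by (simp add: max_def)
  thus ?thesis using cy_al(2)[OF assms] by simp
qed

lemma setA_eq: "setA p n = {x \<in> {1..n}. x = al p x}"
  unfolding setA_def al_def ..
lemma setC_eq: "setC p n = {x \<in> {1..n}. x = ga p x}"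
proof -
  have "x \<in> {1..n} \<Longrightarrow> (x = Max (cyc p x)) = (x = ga p x)" for x using Max_cyc by simp
  thus ?thesis unfolding setC_def by blast
qed
lemma setB_eq: "setB p n = {x \<in> {1..n}. x = be p x}"
  unfolding setB_def
proof (rule Collect_cong)
  fix x
  show "(x \<in> {1..n} \<and> x \<noteq> Min (cyc p x) \<and> x \<noteq> Max (cyc p x)) = (x \<in> {1..n} \<and> x = be p x)"
  proof (cases "x \<in> {1..n}")
    case True
    have "x \<in> cyc p x" unfolding cyc_def by simp
    hence xm: "x \<in> {al p x, be p x, ga p x}" using cy_al(2)[OF True] by simp
    have o: "al p x < be p x" "be p x < ga p x" using cy_ord[OF True] by auto
    have "(x \<noteq> al p x \<and> x \<noteq> ga p x) = (x = be p x)" using xm o by auto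
    thus ?thesis using True Max_cyc[OF True] by (simp add: al_def)
  qed auto
qed

lemma disj: assumes "x \<in> {1..n}" "y \<in> {1..n}" "al p x \<noteq> al p y"
  shows "distinct [al p x, be p x, ga p x, al p y, be p y, ga p y]"
proof -
  have "z \<notin> {al p y, be p y, ga p y}" if "z \<in> {al p x, be p x, ga p x}" for z
    using same_cyc[OF assms(1) that] same_cyc[OF assms(2)] assms(3) by metis
  hence "al p x \<notin> {al p y, be p y, ga p y}" "be p x \<notin> {al p y, be p y, ga p y}" "ga p x \<notin> {al p y, be p y, ga p y}" by auto
  moreover have "al p x < be p x" "be p x < ga p x" "al p y < be p y" "be p y < ga p y"
    using cy_ord[OF assms(1)] cy_ord[OF assms(2)] by auto
  ultimately show ?thesis by simp
qed

end

definition nxt :: "nat list \<Rightarrow> nat \<Rightarrow> nat \<Rightarrow> nat" where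
  "nxt D m l = (LEAST r. l \<le> r \<and> (r = m \<or> \<not> linked D r))"

definition LLs :: "nat list \<Rightarrow> nat \<Rightarrow> nat set" where
  "LLs D m = {l. 1 \<le> l \<and> l \<le> m \<and> (1 < l \<longrightarrow> \<not> linked D (l - 1))}"

lemma nxt_props:
  assumes "l \<le> m"
  shows "l \<le> nxt D m l" "nxt D m l \<le> m" "nxt D m l = m \<or> \<not> linked D (nxt D m l)"
    "\<And>i. l \<le> i \<Longrightarrow> i < nxt D m l \<Longrightarrow> linked D i"
proof -
  have ex: "l \<le> m \<and> (m = m \<or> \<not> linked D m)" using assms by simp
  have L: "l \<le> nxt D m l \<and> (nxt D m l = m \<or> \<not> linked D (nxt D m l))"
    unfolding nxt_def by (rule LeastI[of _ m]) (rule ex)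
  thus "l \<le> nxt D m l" "nxt D m l = m \<or> \<not> linked D (nxt D m l)" by simp_all
  show le: "nxt D m l \<le> m" unfolding nxt_def by (rule Least_le) (rule ex)
  fix i assume i: "l \<le> i" "i < nxt D m l"
  have "\<not> (l \<le> i \<and> (i = m \<or> \<not> linked D i))"
    using not_less_Least[of i "\<lambda>r. l \<le> r \<and> (r = m \<or> \<not> linked D r)"] i(2) unfolding nxt_def by blast
  thus "linked D i" using i le by auto
qed

lemma fb_iff: "S \<in> free_blocks D m \<longleftrightarrow> (\<exists>l \<in> LLs D m. S = {l..nxt D m l})"
proof
  assume "S \<in> free_blocks D m"
  then obtain l r where S: "S = {l..r}" and c: "1 \<le> l" "l \<le> r" "r \<le> m"
    "\<forall>i. l \<le> i \<and> i < r \<longrightarrow> linked D i" "1 < l \<longrightarrow> \<not> linked D (l - 1)" "r < m \<longrightarrow> \<not> linked D r"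
    unfolding free_blocks_def by blast
  have lL: "l \<in> LLs D m" unfolding LLs_def using c by auto
  have lm: "l \<le> m" using c by simp
  have "r = m \<or> \<not> linked D r" using c by auto
  hence "nxt D m l \<le> r" unfolding nxt_def using c(2) by (intro Least_le) simp
  moreover have "r \<le> nxt D m l"
  proof (rule ccontr)
    assume "\<not> r \<le> nxt D m l"
    hence lt: "nxt D m l < r" by simp
    hence "linked D (nxt D m l)" using c(4) nxt_props(1)[OF lm, where D=D] by simp
    moreover have "nxt D m l \<noteq> m" using lt c(3) by simp
    ultimately show False using nxt_props(3)[OF lm, where D=D] by simp
  qed
  ultimately show "\<exists>l \<in> LLs D m. S = {l..nxt D m l}" using S lL by auto
next
  assume "\<exists>l \<in> LLs D m. S = {l..nxt D m l}"
  then obtain l where lL: "l \<in> LLs D m" and S: "S = {l..nxt D m l}" by blast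
  have c: "1 \<le> l" "l \<le> m" "1 < l \<longrightarrow> \<not> linked D (l - 1)" using lL unfolding LLs_def by auto
  note np = nxt_props[OF c(2), where D=D]
  have "1 \<le> l \<and> l \<le> nxt D m l \<and> nxt D m l \<le> m \<and>
       (\<forall>i. l \<le> i \<and> i < nxt D m l \<longrightarrow> linked D i) \<and>
       (1 < l \<longrightarrow> \<not> linked D (l - 1)) \<and>
       (nxt D m l < m \<longrightarrow> \<not> linked D (nxt D m l))"
    using c np by auto
  thus "S \<in> free_blocks D m"
    unfolding free_blocks_def mem_Collect_eq S by (intro exI[of _ l] exI[of _ "nxt D m l"]) simp
qed

lemma Min_ival: "l \<le> r \<Longrightarrow> Min {l..r} = (l::nat)"
  by (rule Min_eqI) auto

lemma Min_fb: "Min ` free_blocks D m = LLs D m"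
proof
  have mi: "Min {l..nxt D m l} = l" if "l \<in> LLs D m" for l
  proof -
    have "l \<le> m" using that unfolding LLs_def by simp
    thus ?thesis using Min_ival nxt_props(1)[where D=D] by simp
  qed
  show "Min ` free_blocks D m \<subseteq> LLs D m"
  proof
    fix x assume "x \<in> Min ` free_blocks D m"
    then obtain S where S: "S \<in> free_blocks D m" "x = Min S" by blast
    then obtain l where "l \<in> LLs D m" "S = {l..nxt D m l}" using fb_iff by blast
    thus "x \<in> LLs D m" using S mi by simp
  qed
  show "LLs D m \<subseteq> Min ` free_blocks D m"
  proof
    fix l assume l: "l \<in> LLs D m"
    have "{l..nxt D m l} \<in> free_blocks D m" using fb_iff l by blast
    thus "l \<in> Min ` free_blocks D m" using mi[OF l] by (metis imageI)
  qed
qed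

lemma THE_fb: assumes "l \<in> LLs D m"
  shows "(THE S. S \<in> free_blocks D m \<and> Min S = l) = {l..nxt D m l}"
proof (rule the_equality)
  have lm: "l \<le> m" using assms unfolding LLs_def by simp
  show "{l..nxt D m l} \<in> free_blocks D m \<and> Min {l..nxt D m l} = l"
    using fb_iff assms nxt_props(1)[OF lm, where D=D] Min_ival by auto
  fix S assume "S \<in> free_blocks D m \<and> Min S = l"
  then obtain l' where l': "l' \<in> LLs D m" "S = {l'..nxt D m l'}" and mn: "Min S = l" using fb_iff by blast
  have "l' \<le> m" using l' unfolding LLs_def by simp
  hence "Min S = l'" using l' nxt_props(1)[where D=D] Min_ival by simp
  thus "S = {l..nxt D m l}" using mn l' by simp
qed

lemma fc_eq: "free_composition D m = map (\<lambda>l. Suc (nxt D m l) - l) (sorted_list_of_set (LLs D m))"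
  unfolding free_composition_def Min_fb
proof (rule map_cong[OF refl])
  fix l assume "l \<in> set (sorted_list_of_set (LLs D m))"
  hence l: "l \<in> LLs D m" unfolding LLs_def by simp
  thus "card (THE S. S \<in> free_blocks D m \<and> Min S = l) = Suc (nxt D m l) - l"
    using THE_fb by simp
qed

lemma strict_nth_less_iff:
  assumes "sorted_wrt (<) (xs :: nat list)" "i < length xs" "j < length xs"
  shows "xs ! i < xs ! j \<longleftrightarrow> i < j"
proof
  assume "xs ! i < xs ! j"
  show "i < j"
  proof (rule ccontr)
    assume "\<not> i < j"
    hence "j < i \<or> j = i" by auto
    thus False using sorted_wrt_nth_less[OF assms(1), of j i] assms \<open>xs ! i < xs ! j\<close> by auto
  qed
qed (rule sorted_wrt_nth_less[OF assms(1)], use assms in auto)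

lemma sum_take_le: "sum_list (take j (xs :: nat list)) \<le> sum_list xs"
  by (metis append_take_drop_id sum_list_append le_add1)

context
  fixes D :: "nat list" and m :: nat
  assumes m1: "1 \<le> m"
begin

abbreviation "LL \<equiv> LLs D m"
abbreviation "Ls \<equiv> sorted_list_of_set (LLs D m)"

lemma LL_mem: "x \<in> LL \<longleftrightarrow> 1 \<le> x \<and> x \<le> m \<and> (1 < x \<longrightarrow> \<not> linked D (x - 1))"
  by (simp add: LLs_def)

lemma finLL: "finite LL" unfolding LLs_def by (rule finite_subset[of _ "{..m}"]) auto

lemma Ls_props: "sorted_wrt (<) Ls" "set Ls = LL" "length Ls = card LL"
  using finLL by auto

lemma one_LL: "1 \<in> LL" using LL_mem m1 by simp

lemma Ls0: "0 < length Ls" "Ls ! 0 = 1"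
proof -
  have "1 \<in> set Ls" using one_LL Ls_props by simp
  then obtain t where t: "t < length Ls" "Ls ! t = 1" by (metis in_set_conv_nth)
  show "0 < length Ls" using t by simp
  have "Ls ! 0 \<in> LL" using Ls_props t by (metis nth_mem gr_zeroI less_nat_zero_code)
  hence "1 \<le> Ls ! 0" using LL_mem by simp
  moreover have "Ls ! 0 \<le> Ls ! t"
    using sorted_wrt_nth_less[OF Ls_props(1), of 0 t] t by (cases t) auto
  ultimately show "Ls ! 0 = 1" using t by simp
qed

lemma Ls_step:
  assumes j: "j < length Ls"
  shows "Suc j < length Ls \<Longrightarrow> Ls ! Suc j = Suc (nxt D m (Ls ! j))"
    and "Suc j = length Ls \<Longrightarrow> nxt D m (Ls ! j) = m"
proof -
  define l where "l = Ls ! j"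
  define r where "r = nxt D m l"
  have lL: "l \<in> LL" using j Ls_props l_def by (metis nth_mem)
  have lm: "1 \<le> l" "l \<le> m" using lL using LL_mem by auto
  note np = nxt_props[OF lm(2), where D=D, folded r_def]
  have mem_idx: "\<exists>t < length Ls. Ls ! t = y" if "y \<in> LL" for y
    using that Ls_props by (metis in_set_conv_nth)
  have no_between: "y \<notin> LL" if "l < y" "y \<le> r" for y
  proof
    assume "y \<in> LL"
    hence "\<not> linked D (y - 1)" using that lm using LL_mem by auto
    moreover have "linked D (y - 1)" using np(4)[of "y - 1"] that by auto
    ultimately show False by simp
  qed
  have succ: "Suc r \<in> LL" if "r < m"
    using that np(3) np(1) lm using LL_mem by auto
  {
    assume sj: "Suc j < length Ls"
    have y: "Ls ! Suc j \<in> LL" using sj Ls_props by (metis nth_mem)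
    have gt: "l < Ls ! Suc j" using sorted_wrt_nth_less[OF Ls_props(1), of j "Suc j"] sj l_def by simp
    have rm: "r < m"
    proof (rule ccontr)
      assume "\<not> r < m"
      hence "r = m" using np(2) by simp
      moreover have "Ls ! Suc j \<le> m" using y using LL_mem by simp
      ultimately show False using no_between[OF gt] y by simp
    qed
    have ge: "Suc r \<le> Ls ! Suc j" using no_between[OF gt] y by force
    obtain t where t: "t < length Ls" "Ls ! t = Suc r" using mem_idx[OF succ[OF rm]] by blast
    have "j < t" using strict_nth_less_iff[OF Ls_props(1) j t(1)] t(2) l_def np(1) by simp
    hence "Ls ! Suc j \<le> Ls ! t"
      using sorted_wrt_nth_less[OF Ls_props(1), of "Suc j" t] t by (cases "Suc j = t") auto
    thus "Ls ! Suc j = Suc (nxt D m (Ls ! j))" using ge t(2) r_def l_def by simp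
  }
  {
    assume sj: "Suc j = length Ls"
    show "nxt D m (Ls ! j) = m"
    proof (rule ccontr)
      assume "nxt D m (Ls ! j) \<noteq> m"
      hence rm: "r < m" using np(2) r_def l_def by simp
      obtain t where t: "t < length Ls" "Ls ! t = Suc r" using mem_idx[OF succ[OF rm]] by blast
      have "j < t" using strict_nth_less_iff[OF Ls_props(1) j t(1)] t(2) l_def np(1) by simp
      thus False using t sj by simp
    qed
  }
qed

abbreviation "XX \<equiv> free_composition D m"

lemma XX_len: "length XX = length Ls" by (simp add: fc_eq)

lemma S_formula: "j \<le> length XX \<Longrightarrow> sum_list (take j XX) = (if j < length XX then Ls ! j - 1 else m)"
proof (induction j)
  case 0
  then show ?case using Ls0 XX_len by simp
next
  case (Suc j)
  have j: "j < length Ls" using Suc.prems XX_len by simp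
  have IH: "sum_list (take j XX) = Ls ! j - 1" using Suc.IH Suc.prems XX_len by simp
  have xj: "XX ! j = Suc (nxt D m (Ls ! j)) - Ls ! j" using j by (simp add: fc_eq)
  have lL: "Ls ! j \<in> LL" using j Ls_props by (metis nth_mem)
  have lm: "1 \<le> Ls ! j" "Ls ! j \<le> m" using lL using LL_mem by auto
  have le: "Ls ! j \<le> nxt D m (Ls ! j)" using nxt_props(1)[OF lm(2)] .
  have "sum_list (take (Suc j) XX) = sum_list (take j XX) + XX ! j"
    using j XX_len by (simp add: take_Suc_conv_app_nth)
  also have "\<dots> = nxt D m (Ls ! j)" using IH xj lm le by simp
  finally have e: "sum_list (take (Suc j) XX) = nxt D m (Ls ! j)" .
  show ?case
  proof (cases "Suc j < length XX")
    case True
    thus ?thesis using e Ls_step(1)[OF j] XX_len by simp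
  next
    case False
    hence "Suc j = length Ls" using Suc.prems XX_len by simp
    thus ?thesis using e Ls_step(2)[OF j] XX_len by simp
  qed
qed

lemma FC1: "sum_list XX = m"
  using S_formula[of "length XX"] by simp

lemma FC2: assumes "1 \<le> j" "j < length XX"
  shows "1 \<le> sum_list (take j XX)" "sum_list (take j XX) < m" "\<not> linked D (sum_list (take j XX))"
proof -
  have e: "sum_list (take j XX) = Ls ! j - 1" using S_formula[of j] assms by simp
  have j: "j < length Ls" using assms XX_len by simp
  have lL: "Ls ! j \<in> LL" using j Ls_props by (metis nth_mem)
  have "Ls ! 0 < Ls ! j" using sorted_wrt_nth_less[OF Ls_props(1), of 0 j] j assms by simp
  hence g: "1 < Ls ! j" using Ls0 by simp
  show "1 \<le> sum_list (take j XX)" using e g by simp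
  have "Ls ! j \<le> m" using lL LL_mem by simp
  thus "sum_list (take j XX) < m" using e g by linarith
  show "\<not> linked D (sum_list (take j XX))" using e g lL using LL_mem by simp
qed

lemma FC3: "sum_list (take j XX) \<le> m" using sum_take_le FC1 by metis

end

lemma dist9: "distinct [a,b,c,d,e,f] \<Longrightarrow> distinct [a,b,c,g,h,i] \<Longrightarrow> distinct [d,e,f,g,h,i]
  \<Longrightarrow> distinct [a,b,c,d,e,f,g,h,i]"
  by simp

lemma sl_map:
  assumes "finite S" "strict_mono_on S (f :: nat \<Rightarrow> nat)"
  shows "sorted_list_of_set (f ` S) = map f (sorted_list_of_set S)"
proof -
  have s1: "sorted_wrt (<) (sorted_list_of_set S)" by simp
  have "sorted_wrt (\<lambda>x y. f x < f y) (sorted_list_of_set S)"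
    using s1 by (rule sorted_wrt_mono_rel[rotated]) (use assms in \<open>auto simp: strict_mono_on_def\<close>)
  hence "sorted_wrt (<) (map f (sorted_list_of_set S))" by (simp add: sorted_wrt_map)
  moreover have "set (map f (sorted_list_of_set S)) = f ` S" using assms by simp
  moreover have "length (map f (sorted_list_of_set S)) = card (f ` S)"
    using assms by (simp add: card_image strict_mono_on_imp_inj_on)
  moreover have "finite (f ` S)" using assms by simp
  ultimately show ?thesis using sorted_list_of_set_unique[of "f ` S" "map f (sorted_list_of_set S)"] by blast
qed

lemma filter_upt_sl: "filter P [0..<N] = sorted_list_of_set {q. q < N \<and> P q}"
proof -
  have "sorted_wrt (<) (filter P [0..<N])" by (simp add: sorted_wrt_filter)
  moreover have "set (filter P [0..<N]) = {q. q < N \<and> P q}" by auto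
  moreover have "length (filter P [0..<N]) = card {q. q < N \<and> P q}"
    using distinct_card[of "filter P [0..<N]"] by simp
  moreover have "finite {q. q < N \<and> P q}" by simp
  ultimately show ?thesis using sorted_list_of_set_unique[of "{q. q < N \<and> P q}" "filter P [0..<N]"] by auto
qed

context
  fixes p :: "nat \<Rightarrow> nat" and n m :: nat
  assumes perm: "p permutes {1..n}" and oc: "only_3cycles p n" and av: "avoids132 p n"
    and nm: "n = 3 * m"
begin

lemma P1': assumes x: "x \<in> {1..n}" and y: "y \<in> {1..n}" and h: "al p x < al p y"
  shows "al p y < be p x"
  using P1[OF av cy_al(1)[OF perm oc x] cy_al(1)[OF perm oc y]
      cy_range(1,2)[OF perm oc x] cy_range(1,2)[OF perm oc y] disj[OF perm oc x y] h] h by simp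

lemma P2': assumes x: "x \<in> {1..n}" and y: "y \<in> {1..n}" and h: "al p x < al p y" "be p x < be p y"
  shows "ga p x < ga p y"
  using P2a[OF av cy_al(1)[OF perm oc x] cy_al(1)[OF perm oc y]
      cy_range(1,2)[OF perm oc x] cy_range(1,2)[OF perm oc y] disj[OF perm oc x y] h] h by simp

lemma P2b': assumes x: "x \<in> {1..n}" and y: "y \<in> {1..n}" and h: "al p x < al p y" "be p y < be p x"
  shows "ga p y < ga p x"
  using P2b[OF av cy_al(1)[OF perm oc x] cy_al(1)[OF perm oc y]
      cy_range(1,2)[OF perm oc x] cy_range(1,2)[OF perm oc y] disj[OF perm oc x y] h] h by simp

lemma P3': assumes x: "x \<in> {1..n}" and y: "y \<in> {1..n}" and h: "al p x < al p y" "be p x < be p y"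
  shows "be p y < ga p x"
  using P3[OF av cy_al(1)[OF perm oc x] cy_al(1)[OF perm oc y]
      cy_range(1,2)[OF perm oc x] cy_range(1,2)[OF perm oc y] disj[OF perm oc x y] h] h by simp

lemma P4': assumes x: "x \<in> {1..n}" and y: "y \<in> {1..n}" and z: "z \<in> {1..n}"
    and h: "al p x < al p y" "be p x < be p y"
  shows "\<not> (be p x < ga p z \<and> ga p z < be p y)" "\<not> (ga p x < be p z \<and> be p z < ga p y)"
proof -
  have p3: "be p y < ga p x" using P3'[OF x y h] .
  have ox: "al p x < be p x" "be p x < ga p x" using cy_ord[OF perm oc x] by auto
  have oy: "al p y < be p y" "be p y < ga p y" using cy_ord[OF perm oc y] by auto
  have "(\<not> (be p x < ga p z \<and> ga p z < be p y)) \<and> (\<not> (ga p x < be p z \<and> be p z < ga p y))"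
  proof (cases "al p z = al p x")
    case True
    hence "be p z = be p x" "ga p z = ga p x" unfolding be_def ga_def by simp_all
    thus ?thesis using p3 ox by simp
  next
    case F1: False
    show ?thesis
    proof (cases "al p z = al p y")
      case True
      hence "be p z = be p y" "ga p z = ga p y" unfolding be_def ga_def by simp_all
      thus ?thesis using p3 oy by simp
    next
      case F2: False
      have d1: "distinct [al p x, be p x, ga p x, al p y, be p y, ga p y]"
        using disj[OF perm oc x y] h by simp
      have d2: "distinct [al p x, be p x, ga p x, al p z, be p z, ga p z]"
        using disj[OF perm oc x z] F1 by simp
      have d3: "distinct [al p y, be p y, ga p y, al p z, be p z, ga p z]"
        using disj[OF perm oc y z] F2 by simp
      have d: "distinct [al p x, be p x, ga p x, al p y, be p y, ga p y, al p z, be p z, ga p z]"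
        using dist9[OF d1 d2 d3] .
      note r = cy_range(1,2)[OF perm oc x] cy_range(1,2)[OF perm oc y] cy_range(1,2)[OF perm oc z]
      note c = cy_al(1)[OF perm oc x] cy_al(1)[OF perm oc y] cy_al(1)[OF perm oc z]
      show ?thesis using P4i[OF av c r d h] P4ii[OF av c r d h] by simp
    qed
  qed
  thus "\<not> (be p x < ga p z \<and> ga p z < be p y)" "\<not> (ga p x < be p z \<and> be p z < ga p y)" by simp_all
qed

abbreviation "AA \<equiv> setA p n"
abbreviation "BB \<equiv> setB p n"
abbreviation "CC \<equiv> setC p n"

lemma memA: "x \<in> AA \<longleftrightarrow> x \<in> {1..n} \<and> x = al p x" using setA_eq[OF perm oc] by simp
lemma memB: "x \<in> BB \<longleftrightarrow> x \<in> {1..n} \<and> x = be p x" using setB_eq[OF perm oc] by simp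
lemma memC: "x \<in> CC \<longleftrightarrow> x \<in> {1..n} \<and> x = ga p x" using setC_eq[OF perm oc] by simp

lemma in3: assumes "x \<in> {1..n}" shows "x = al p x \<or> x = be p x \<or> x = ga p x"
proof -
  have "x \<in> cyc p x" unfolding cyc_def by simp
  thus ?thesis using cy_al(2)[OF perm oc assms] by simp
qed

lemma ABC_un: "x \<in> {1..n} \<Longrightarrow> x \<in> AA \<or> x \<in> BB \<or> x \<in> CC"
  using in3 memA memB memC by blast

lemma ABC_disj: "AA \<inter> BB = {}" "AA \<inter> CC = {}" "BB \<inter> CC = {}"
proof -
  have "x \<notin> BB" "x \<notin> CC" if "x \<in> AA" for x
    using that memA memB memC cy_ord[OF perm oc, of x] by auto
  moreover have "x \<notin> CC" if "x \<in> BB" for x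
    using that memB memC cy_ord[OF perm oc, of x] by auto
  ultimately show "AA \<inter> BB = {}" "AA \<inter> CC = {}" "BB \<inter> CC = {}" by blast+
qed

lemma A_lt: assumes a: "a \<in> AA" and y: "y \<in> {1..n}" and ny: "y \<notin> AA" shows "a < y"
proof -
  have ar: "a \<in> {1..n}" and aa: "al p a = a" using a memA by auto
  have yne: "y \<noteq> al p y" using y ny memA by auto
  have yb: "y = be p y \<or> y = ga p y" using in3[OF y] yne by auto
  have oy: "al p y < be p y" "be p y < ga p y" using cy_ord[OF perm oc y] by auto
  have yge: "be p y \<le> y" using yb oy by auto
  consider "al p y = a" | "a < al p y" | "al p y < a" by linarith
  thus ?thesis
  proof cases
    case 1 thus ?thesis using yge oy by simp
  next
    case 2 thus ?thesis using yge oy by simp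
  next
    case 3
    have "al p a < be p y" using P1'[OF y ar] 3 aa by simp
    thus ?thesis using aa yge by simp
  qed
qed

lemma sc: assumes x: "x \<in> {1..n}"
  shows "al p (al p x) = al p x" "be p (al p x) = be p x" "ga p (al p x) = ga p x" "al p x \<in> {1..n}"
    "al p (be p x) = al p x" "be p (be p x) = be p x" "ga p (be p x) = ga p x" "be p x \<in> {1..n}"
    "al p (ga p x) = al p x" "be p (ga p x) = be p x" "ga p (ga p x) = ga p x" "ga p x \<in> {1..n}"
proof -
  have a: "al p x \<in> {al p x, be p x, ga p x}" and b: "be p x \<in> {al p x, be p x, ga p x}"
    and c: "ga p x \<in> {al p x, be p x, ga p x}" by simp_all
  show "al p (al p x) = al p x" "be p (al p x) = be p x" "ga p (al p x) = ga p x" "al p x \<in> {1..n}"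
    using same_cyc[OF perm oc x a] by simp_all
  show "al p (be p x) = al p x" "be p (be p x) = be p x" "ga p (be p x) = ga p x" "be p x \<in> {1..n}"
    using same_cyc[OF perm oc x b] by simp_all
  show "al p (ga p x) = al p x" "be p (ga p x) = be p x" "ga p (ga p x) = ga p x" "ga p x \<in> {1..n}"
    using same_cyc[OF perm oc x c] by simp_all
qed

lemma be_bij: "bij_betw (be p) AA BB"
proof (rule bij_betw_imageI)
  show "inj_on (be p) AA"
  proof (rule inj_onI)
    fix x y assume x: "x \<in> AA" and y: "y \<in> AA" and e: "be p x = be p y"
    have xr: "x \<in> {1..n}" "x = al p x" and yr: "y \<in> {1..n}" "y = al p y" using x y memA by auto
    have "al p (be p x) = al p (be p y)" using e by simp
    hence "al p x = al p y" using sc(5)[OF xr(1)] sc(5)[OF yr(1)] by simp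
    thus "x = y" using xr(2) yr(2) by simp
  qed
  show "be p ` AA = BB"
  proof
    show "be p ` AA \<subseteq> BB"
    proof
      fix z assume "z \<in> be p ` AA"
      then obtain x where x: "x \<in> AA" and z: "z = be p x" by auto
      have xr: "x \<in> {1..n}" using x memA by auto
      have "z \<in> {1..n}" "z = be p z" using sc(6,8)[OF xr] z by simp_all
      thus "z \<in> BB" using memB by simp
    qed
    show "BB \<subseteq> be p ` AA"
    proof
      fix z assume z: "z \<in> BB"
      have zr: "z \<in> {1..n}" "z = be p z" using z memB by auto
      have "al p z \<in> {1..n}" "al p (al p z) = al p z" using sc(1,4)[OF zr(1)] by simp_all
      hence A: "al p z \<in> AA" using memA by simp
      have "be p (al p z) = z" using sc(2)[OF zr(1)] zr(2) by simp
      thus "z \<in> be p ` AA" using A by (metis imageI)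
    qed
  qed
qed

lemma ga_bij: "bij_betw (ga p) AA CC"
proof (rule bij_betw_imageI)
  show "inj_on (ga p) AA"
  proof (rule inj_onI)
    fix x y assume x: "x \<in> AA" and y: "y \<in> AA" and e: "ga p x = ga p y"
    have xr: "x \<in> {1..n}" "x = al p x" and yr: "y \<in> {1..n}" "y = al p y" using x y memA by auto
    have "al p (ga p x) = al p (ga p y)" using e by simp
    hence "al p x = al p y" using sc(9)[OF xr(1)] sc(9)[OF yr(1)] by simp
    thus "x = y" using xr(2) yr(2) by simp
  qed
  show "ga p ` AA = CC"
  proof
    show "ga p ` AA \<subseteq> CC"
    proof
      fix z assume "z \<in> ga p ` AA"
      then obtain x where x: "x \<in> AA" and z: "z = ga p x" by auto
      have xr: "x \<in> {1..n}" using x memA by auto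
      have "z \<in> {1..n}" "z = ga p z" using sc(11,12)[OF xr] z by simp_all
      thus "z \<in> CC" using memC by simp
    qed
    show "CC \<subseteq> ga p ` AA"
    proof
      fix z assume z: "z \<in> CC"
      have zr: "z \<in> {1..n}" "z = ga p z" using z memC by auto
      have "al p z \<in> {1..n}" "al p (al p z) = al p z" using sc(1,4)[OF zr(1)] by simp_all
      hence A: "al p z \<in> AA" using memA by simp
      have "ga p (al p z) = z" using sc(3)[OF zr(1)] zr(2) by simp
      thus "z \<in> ga p ` AA" using A by (metis imageI)
    qed
  qed
qed

lemma finABC: "finite AA" "finite BB" "finite CC" "AA \<subseteq> {1..n}" "BB \<subseteq> {1..n}" "CC \<subseteq> {1..n}"
  using memA memB memC by (auto intro: finite_subset[of _ "{1..n}"])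

lemma cardA: "card AA = m"
proof -
  have u: "{1..n} = AA \<union> BB \<union> CC" using ABC_un finABC by blast
  have "card {1..n} = card AA + card BB + card CC"
    unfolding u using ABC_disj finABC
    by (simp add: card_Un_disjoint Int_Un_distrib2)
  moreover have "card BB = card AA" "card CC = card AA"
    using bij_betw_same_card[OF be_bij] bij_betw_same_card[OF ga_bij] by simp_all
  ultimately show ?thesis using nm by simp
qed

lemma A_eq: "AA = {1..m}"
proof
  show "AA \<subseteq> {1..m}"
  proof
    fix x assume x: "x \<in> AA"
    have xr: "x \<in> {1..n}" using x memA by auto
    show "x \<in> {1..m}"
    proof (rule ccontr)
      assume "x \<notin> {1..m}"
      hence xm: "m < x" using xr by auto
      have "{1..x} \<subseteq> AA"
      proof
        fix y assume y: "y \<in> {1..x}"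
        hence yr: "y \<in> {1..n}" using xr by auto
        show "y \<in> AA" using A_lt[OF x yr] y by (cases "y \<in> AA") auto
      qed
      hence "card {1..x} \<le> card AA" by (rule card_mono[OF finABC(1)])
      thus False using cardA xm by simp
    qed
  qed
  show "{1..m} \<subseteq> AA"
  proof
    fix y assume y: "y \<in> {1..m}"
    show "y \<in> AA"
    proof (rule ccontr)
      assume ny: "y \<notin> AA"
      have yr: "y \<in> {1..n}" using y nm by auto
      have "AA \<subseteq> {1..<y}" using A_lt[OF _ yr ny] memA by auto
      hence "card AA \<le> card {1..<y}" by (rule card_mono[OF finite_atLeastLessThan])
      thus False using cardA y by auto
    qed
  qed
qed

lemma BC_eq: "BB \<union> CC = {Suc m..<Suc n}"
proof -
  have u: "{1..n} = AA \<union> BB \<union> CC" using ABC_un finABC by blast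
  have "BB \<union> CC = {1..n} - AA" using u ABC_disj by blast
  thus ?thesis using A_eq nm by auto
qed


abbreviation "Bs \<equiv> sorted_list_of_set BB"
abbreviation "Cs \<equiv> sorted_list_of_set CC"

lemma B_rng: assumes "x \<in> BB" shows "Suc m \<le> x \<and> x \<le> n"
proof -
  have "x \<in> {Suc m..<Suc n}" using BC_eq assms by blast
  thus ?thesis by simp
qed
lemma C_rng: assumes "x \<in> CC" shows "Suc m \<le> x \<and> x \<le> n"
proof -
  have "x \<in> {Suc m..<Suc n}" using BC_eq assms by blast
  thus ?thesis by simp
qed

lemma cardB: "card BB = m" using bij_betw_same_card[OF be_bij] cardA by simp
lemma cardC: "card CC = m" using bij_betw_same_card[OF ga_bij] cardA by simp

lemma Bs_props: "sorted_wrt (<) Bs" "set Bs = BB" "length Bs = m"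
  using finABC(2) cardB by auto
lemma Cs_props: "sorted_wrt (<) Cs" "set Cs = CC" "length Cs = m"
  using finABC(3) cardC by auto

lemma Bs_mem: "i < m \<Longrightarrow> Bs ! i \<in> BB" using Bs_props by (metis nth_mem)
lemma Cs_mem: "i < m \<Longrightarrow> Cs ! i \<in> CC" using Cs_props by (metis nth_mem)

lemma B_facts: assumes "b \<in> BB" shows "b \<in> {1..n}" "be p b = b" "al p b \<in> AA"
proof -
  show br: "b \<in> {1..n}" using assms memB by auto
  show "be p b = b" using assms memB by auto
  have "al p b \<in> {1..n}" "al p (al p b) = al p b" using sc(1,4)[OF br] by simp_all
  thus "al p b \<in> AA" using memA by simp
qed

lemma al_B_inj: assumes "b1 \<in> BB" "b2 \<in> BB" "al p b1 = al p b2" shows "b1 = b2"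
proof -
  have "be p b1 = be p b2" using assms(3) unfolding be_def by simp
  thus ?thesis using B_facts(2)[OF assms(1)] B_facts(2)[OF assms(2)] by simp
qed

lemma ga_mono: assumes b1: "b1 \<in> BB" and b2: "b2 \<in> BB" and lt: "b1 < b2" shows "ga p b1 < ga p b2"
proof -
  have ne: "al p b1 \<noteq> al p b2" using al_B_inj[OF b1 b2] lt by auto
  have e: "be p b1 = b1" "be p b2 = b2" using B_facts(2) b1 b2 by auto
  have r: "b1 \<in> {1..n}" "b2 \<in> {1..n}" using B_facts(1) b1 b2 by auto
  consider "al p b1 < al p b2" | "al p b2 < al p b1" using ne by linarith
  thus ?thesis
  proof cases
    case 1 thus ?thesis using P2'[OF r 1] e lt by simp
  next
    case 2 thus ?thesis using P2b'[OF r(2) r(1) 2] e lt by simp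
  qed
qed

lemma ga_img: "ga p ` BB = CC"
proof
  show "ga p ` BB \<subseteq> CC"
  proof
    fix z assume "z \<in> ga p ` BB"
    then obtain b where b: "b \<in> BB" "z = ga p b" by auto
    have "ga p b \<in> {1..n}" "ga p (ga p b) = ga p b" using sc(11,12)[OF B_facts(1)[OF b(1)]] by simp_all
    thus "z \<in> CC" using memC b by simp
  qed
  show "CC \<subseteq> ga p ` BB"
  proof
    fix c assume c: "c \<in> CC"
    have cr: "c \<in> {1..n}" "c = ga p c" using c memC by auto
    have "be p c \<in> {1..n}" "be p (be p c) = be p c" using sc(6,8)[OF cr(1)] by simp_all
    hence "be p c \<in> BB" using memB by simp
    moreover have "ga p (be p c) = c" using sc(7)[OF cr(1)] cr(2) by simp
    ultimately show "c \<in> ga p ` BB" by (metis imageI)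
  qed
qed

lemma Cs_eq: "Cs = map (ga p) Bs"
proof -
  have "strict_mono_on BB (ga p)" unfolding strict_mono_on_def using ga_mono by blast
  thus ?thesis using sl_map[OF finABC(2)] ga_img by metis
qed

abbreviation "DW \<equiv> dyck_word p n"

lemma dw_eq: "DW = map (\<lambda>y. if y \<in> CC then 1 else 0) [Suc m..<Suc n]"
  unfolding dyck_word_def BC_eq by simp

lemma dw_len: "length DW = 2 * m" using dw_eq nm by simp

lemma dw_nth: assumes "q < 2 * m" shows "DW ! q = (if Suc m + q \<in> CC then 1 else 0)"
proof -
  have ql: "q < length [Suc m..<Suc n]" using assms nm by simp
  have "[Suc m..<Suc n] ! q = Suc m + q" using ql by (simp del: upt_Suc)
  thus ?thesis unfolding dw_eq using nth_map[OF ql, of "\<lambda>y. if y \<in> CC then 1 else 0"] by simp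
qed

lemma BC_iff: "q < 2 * m \<Longrightarrow> (Suc m + q \<in> BB) = (Suc m + q \<notin> CC)"
proof -
  assume q: "q < 2 * m"
  have "Suc m + q \<in> BB \<union> CC" using BC_eq q nm by simp
  thus ?thesis using ABC_disj(3) by blast
qed

lemma shift_mono: "(\<And>y. y \<in> S \<Longrightarrow> Suc m \<le> y) \<Longrightarrow> strict_mono_on S (\<lambda>y. y - Suc m)"
  unfolding strict_mono_on_def by (metis diff_less_mono)

lemma shift_img: assumes "\<And>y. y \<in> S \<Longrightarrow> Suc m \<le> y \<and> y \<le> n"
  shows "(\<lambda>y. y - Suc m) ` S = {q. q < 2 * m \<and> Suc m + q \<in> S}"
proof
  show "(\<lambda>y. y - Suc m) ` S \<subseteq> {q. q < 2 * m \<and> Suc m + q \<in> S}"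
  proof
    fix q assume "q \<in> (\<lambda>y. y - Suc m) ` S"
    then obtain y where y: "y \<in> S" "q = y - Suc m" by auto
    have "Suc m \<le> y" "y \<le> n" using assms y by auto
    thus "q \<in> {q. q < 2 * m \<and> Suc m + q \<in> S}" using y nm by auto
  qed
  show "{q. q < 2 * m \<and> Suc m + q \<in> S} \<subseteq> (\<lambda>y. y - Suc m) ` S"
  proof
    fix q assume "q \<in> {q. q < 2 * m \<and> Suc m + q \<in> S}"
    hence q: "Suc m + q \<in> S" by simp
    have "q = (Suc m + q) - Suc m" by simp
    thus "q \<in> (\<lambda>y. y - Suc m) ` S" using q by (metis imageI)
  qed
qed

lemma lp0: "letter_pos 0 DW = map (\<lambda>y. y - Suc m) Bs"
proof -
  have "letter_pos 0 DW = filter (\<lambda>q. DW ! q = 0) [0..<2 * m]" unfolding letter_pos_def dw_len ..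
  also have "\<dots> = filter (\<lambda>q. Suc m + q \<in> BB) [0..<2 * m]"
  proof (rule filter_cong[OF refl])
    fix x assume "x \<in> set [0..<2 * m]"
    hence x: "x < 2 * m" by simp
    show "(DW ! x = 0) = (Suc m + x \<in> BB)" using dw_nth[OF x] BC_iff[OF x] by simp
  qed
  also have "\<dots> = sorted_list_of_set {q. q < 2 * m \<and> Suc m + q \<in> BB}" by (rule filter_upt_sl)
  also have "{q. q < 2 * m \<and> Suc m + q \<in> BB} = (\<lambda>y. y - Suc m) ` BB"
    using shift_img[of BB] B_rng by simp
  also have "sorted_list_of_set ((\<lambda>y. y - Suc m) ` BB) = map (\<lambda>y. y - Suc m) Bs"
    by (rule sl_map[OF finABC(2) shift_mono]) (use B_rng in simp)
  finally show ?thesis .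
qed

lemma lp1: "letter_pos 1 DW = map (\<lambda>y. y - Suc m) Cs"
proof -
  have "letter_pos 1 DW = filter (\<lambda>q. DW ! q = 1) [0..<2 * m]" unfolding letter_pos_def dw_len ..
  also have "\<dots> = filter (\<lambda>q. Suc m + q \<in> CC) [0..<2 * m]"
    by (rule filter_cong[OF refl]) (simp add: dw_nth)
  also have "\<dots> = sorted_list_of_set {q. q < 2 * m \<and> Suc m + q \<in> CC}" by (rule filter_upt_sl)
  also have "{q. q < 2 * m \<and> Suc m + q \<in> CC} = (\<lambda>y. y - Suc m) ` CC"
    using shift_img[of CC] C_rng by simp
  also have "sorted_list_of_set ((\<lambda>y. y - Suc m) ` CC) = map (\<lambda>y. y - Suc m) Cs"
    by (rule sl_map[OF finABC(3) shift_mono]) (use C_rng in simp)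
  finally show ?thesis .
qed

lemma linked_iff: assumes "1 \<le> i" "i < m"
  shows "linked DW i \<longleftrightarrow> Bs ! i = Suc (Bs ! (i - 1)) \<and> Cs ! i = Suc (Cs ! (i - 1))"
proof -
  have i1: "i - 1 < m" using assms by simp
  have g: "Suc m \<le> Bs ! i" "Suc m \<le> Bs ! (i - 1)" "Suc m \<le> Cs ! i" "Suc m \<le> Cs ! (i - 1)"
    using B_rng[OF Bs_mem[OF assms(2)]] B_rng[OF Bs_mem[OF i1]]
      C_rng[OF Cs_mem[OF assms(2)]] C_rng[OF Cs_mem[OF i1]] by auto
  have iB: "i < length Bs" "i - 1 < length Bs" "i < length Cs" "i - 1 < length Cs"
    using assms i1 Bs_props(3) Cs_props(3) by auto
  have e1: "letter_pos 0 DW ! i = Bs ! i - Suc m" unfolding lp0 by (rule nth_map[OF iB(1)])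
  have e2: "letter_pos 0 DW ! (i - 1) = Bs ! (i - 1) - Suc m" unfolding lp0 by (rule nth_map[OF iB(2)])
  have e3: "letter_pos 1 DW ! i = Cs ! i - Suc m" unfolding lp1 by (rule nth_map[OF iB(3)])
  have e4: "letter_pos 1 DW ! (i - 1) = Cs ! (i - 1) - Suc m" unfolding lp1 by (rule nth_map[OF iB(4)])
  show ?thesis unfolding linked_def e1 e2 e3 e4 using g by auto
qed

lemma cut_lemma:
  assumes l: "1 \<le> l" "l < m" and nl: "\<not> linked DW l" and q: "q < l" "l \<le> q'" "q' < m"
  shows "al p (Bs ! q') < al p (Bs ! q)"
proof (rule ccontr)
  assume "\<not> al p (Bs ! q') < al p (Bs ! q)"
  define b where "b = Bs ! q"
  define b' where "b' = Bs ! q'"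
  have qm: "q < m" using q l by simp
  have bB: "b \<in> BB" "b' \<in> BB" using Bs_mem qm q(3) b_def b'_def by auto
  have bb: "b < b'" using sorted_wrt_nth_less[OF Bs_props(1), of q q'] q Bs_props(3) b_def b'_def by simp
  have ne: "al p b \<noteq> al p b'" using al_B_inj[OF bB] bb by auto
  hence alt: "al p b < al p b'" using \<open>\<not> al p (Bs ! q') < al p (Bs ! q)\<close> b_def b'_def by simp
  have br: "b \<in> {1..n}" "b' \<in> {1..n}" using B_facts(1) bB by auto
  have be: "be p b = b" "be p b' = b'" using B_facts(2) bB by auto
  have P4a: "\<not> (b < ga p z \<and> ga p z < b')" if "z \<in> {1..n}" for z
    using P4'(1)[OF br that alt] be bb by simp
  have P4b: "\<not> (ga p b < be p z \<and> be p z < ga p b')" if "z \<in> {1..n}" for z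
    using P4'(2)[OF br that alt] be bb by simp
  have l1: "l - 1 < m" "l - 1 < l" using l by auto
  have qq: "q = l - 1 \<or> q < l - 1" "l = q' \<or> l < q'" using q l by linarith+
  have idxB: "\<not> (Bs ! (l - 1) < y \<and> y < Bs ! l)" if "y \<in> BB" for y
  proof
    assume a: "Bs ! (l - 1) < y \<and> y < Bs ! l"
    have "y \<in> set Bs" using that Bs_props(2) by simp
    then obtain t where t0: "t < length Bs" "Bs ! t = y" using in_set_conv_nth[of y Bs] by auto
    hence t: "t < m" "Bs ! t = y" using Bs_props(3) by auto
    have "l - 1 < t" using strict_nth_less_iff[OF Bs_props(1), of "l - 1" t] a t l1 Bs_props(3) by simp
    moreover have "t < l" using strict_nth_less_iff[OF Bs_props(1), of t l] a t l Bs_props(3) by simp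
    ultimately show False by simp
  qed
  have idxC: "\<not> (Cs ! (l - 1) < y \<and> y < Cs ! l)" if "y \<in> CC" for y
  proof
    assume a: "Cs ! (l - 1) < y \<and> y < Cs ! l"
    have "y \<in> set Cs" using that Cs_props(2) by simp
    then obtain t where t0: "t < length Cs" "Cs ! t = y" using in_set_conv_nth[of y Cs] by auto
    hence t: "t < m" "Cs ! t = y" using Cs_props(3) by auto
    have "l - 1 < t" using strict_nth_less_iff[OF Cs_props(1), of "l - 1" t] a t l1 Cs_props(3) by simp
    moreover have "t < l" using strict_nth_less_iff[OF Cs_props(1), of t l] a t l Cs_props(3) by simp
    ultimately show False by simp
  qed
  have "Bs ! l = Suc (Bs ! (l - 1))"
  proof (rule ccontr)
    assume nb: "Bs ! l \<noteq> Suc (Bs ! (l - 1))"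
    have ul: "Bs ! (l - 1) < Bs ! l"
      using sorted_wrt_nth_less[OF Bs_props(1), of "l - 1" l] l Bs_props(3) by simp
    define w where "w = Suc (Bs ! (l - 1))"
    have wl: "w < Bs ! l" using ul nb w_def by simp
    have "b \<le> Bs ! (l - 1)"
      using sorted_wrt_nth_less[OF Bs_props(1), of q "l - 1"] q l1 Bs_props(3) b_def
      using qq(1) by auto
    moreover have "Bs ! l \<le> b'"
      using sorted_wrt_nth_less[OF Bs_props(1), of l q'] q l Bs_props(3) b'_def
      using qq(2) by auto
    ultimately have bw: "b < w" "w < b'" using wl w_def by auto
    have "Suc m \<le> Bs ! (l - 1)" using B_rng[OF Bs_mem[OF l1(1)]] by simp
    moreover have "Bs ! l \<le> n" using B_rng[OF Bs_mem[OF l(2)]] by simp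
    ultimately have "w \<in> {Suc m..<Suc n}" using wl w_def by simp
    hence "w \<in> BB \<union> CC" unfolding BC_eq .
    moreover have "w \<notin> BB" using idxB wl w_def by auto
    ultimately have wC: "w \<in> CC" by simp
    hence "w \<in> {1..n}" "ga p w = w" using memC by auto
    thus False using P4a[of w] bw by simp
  qed
  moreover have "Cs ! l = Suc (Cs ! (l - 1))"
  proof (rule ccontr)
    assume nb: "Cs ! l \<noteq> Suc (Cs ! (l - 1))"
    have ul: "Cs ! (l - 1) < Cs ! l"
      using sorted_wrt_nth_less[OF Cs_props(1), of "l - 1" l] l Cs_props(3) by simp
    define w where "w = Suc (Cs ! (l - 1))"
    have wl: "w < Cs ! l" using ul nb w_def by simp
    have cq: "Cs ! q = ga p b" "Cs ! q' = ga p b'" using Cs_eq Bs_props(3) qm q(3) b_def b'_def by simp_all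
    have "Cs ! q \<le> Cs ! (l - 1)"
      using sorted_wrt_nth_less[OF Cs_props(1), of q "l - 1"] q l1 Cs_props(3)
      using qq(1) by auto
    moreover have "Cs ! l \<le> Cs ! q'"
      using sorted_wrt_nth_less[OF Cs_props(1), of l q'] q l Cs_props(3)
      using qq(2) by auto
    ultimately have bw: "ga p b < w" "w < ga p b'" using wl w_def cq by auto
    have "Suc m \<le> Cs ! (l - 1)" using C_rng[OF Cs_mem[OF l1(1)]] by simp
    moreover have "Cs ! l \<le> n" using C_rng[OF Cs_mem[OF l(2)]] by simp
    ultimately have "w \<in> {Suc m..<Suc n}" using wl w_def by simp
    hence "w \<in> BB \<union> CC" unfolding BC_eq .
    moreover have "w \<notin> CC" using idxC wl w_def by auto
    ultimately have wB: "w \<in> BB" by simp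
    hence "w \<in> {1..n}" "be p w = w" using memB by auto
    thus False using P4b[of w] bw by simp
  qed
  ultimately have "linked DW l" using linked_iff l by simp
  thus False using nl by simp
qed

end

lemma sum_take_rev: assumes "t \<le> length xs"
  shows "sum_list (take t (rev (xs :: nat list))) = sum_list xs - sum_list (take (length xs - t) xs)"
proof -
  have "take t (rev xs) = rev (drop (length xs - t) xs)" by (simp add: take_rev)
  hence "sum_list (take t (rev xs)) = sum_list (drop (length xs - t) xs)" by simp
  moreover have "sum_list xs = sum_list (take (length xs - t) xs) + sum_list (drop (length xs - t) xs)"
    by (metis append_take_drop_id sum_list_append)
  ultimately show ?thesis by simp
qed

theorem lemma4p3:
  fixes p :: "nat \<Rightarrow> nat" and m :: nat
  assumes "m \<ge> 1"
    and "p permutes {1..3*m}"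
    and "avoids132 p (3*m)"
    and "only_3cycles p (3*m)"
  defines "X \<equiv> free_composition (dyck_word p (3*m)) m"
  defines "k \<equiv> length X"
  shows "\<forall>b \<in> setB p (3*m). \<forall>j \<in> {1..k}.
           b \<in> block (setB p (3*m)) X j \<longrightarrow>
           Min (cyc p b) \<in> block (setA p (3*m)) (rev X) (k - j + 1)"
proof (intro ballI impI)
  fix b j
  assume bB: "b \<in> setB p (3*m)" and jk: "j \<in> {1..k}" and bX: "b \<in> block (setB p (3*m)) X j"
  note perm = assms(2) and oc = assms(4) and av = assms(3)
  note nm = refl[of "3 * m"]
  define D where "D = dyck_word p (3*m)"
  define S where "S = (\<lambda>j. sum_list (take j X))"
  define Bs where "Bs = sorted_list_of_set (setB p (3*m))"
  have XD: "X = free_composition D m" unfolding X_def D_def ..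
  have FC1': "S k = m" unfolding S_def k_def XD using FC1[OF assms(1)] by simp
  have FC2': "1 \<le> S i" "S i < m" "\<not> linked D (S i)" if "1 \<le> i" "i < k" for i
    using FC2[OF assms(1) that[unfolded k_def XD]] unfolding S_def XD by auto
  have FC3': "S i \<le> m" for i unfolding S_def XD using FC3[OF assms(1)] .
  have j1: "1 \<le> j" "j \<le> k" using jk by auto
  obtain r where r: "b = Bs ! r" "S (j - 1) \<le> r" "r < S j"
    using bX unfolding block_def Bs_def S_def by blast
  have rm: "r < m" using r(3) FC3'[of j] by simp
  have BsP: "sorted_wrt (<) Bs" "set Bs = setB p (3*m)" "length Bs = m"
    using Bs_props[OF perm oc av nm] unfolding Bs_def by auto
  define a where "a = al p b"
  have aMin: "Min (cyc p b) = a" unfolding a_def al_def ..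
  have aA: "a \<in> setA p (3*m)" using B_facts(3)[OF perm oc av nm bB] a_def by simp
  have a1m: "1 \<le> a" "a \<le> m" using aA A_eq[OF perm oc av nm] by auto
  have Bmem: "Bs ! q \<in> setB p (3*m)" if "q < m" for q using Bs_mem[OF perm oc av nm that] Bs_def by simp
  have injal: "inj_on (\<lambda>q. al p (Bs ! q)) {..<m}"
  proof (rule inj_onI)
    fix q1 q2 assume q: "q1 \<in> {..<m}" "q2 \<in> {..<m}" and e: "al p (Bs ! q1) = al p (Bs ! q2)"
    have "Bs ! q1 = Bs ! q2" using al_B_inj[OF perm oc av nm Bmem Bmem e] q by simp
    moreover have "distinct Bs" using BsP(1) by (simp add: strict_sorted_iff)
    ultimately show "q1 = q2" using q BsP(3) nth_eq_iff_index_eq by auto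
  qed
  have alA: "al p (Bs ! q) \<in> {1..m}" if "q < m" for q
    using B_facts(3)[OF perm oc av nm Bmem[OF that]] A_eq[OF perm oc av nm] by simp
  have low: "m - S j \<le> a - 1"
  proof (cases "j = k")
    case True thus ?thesis using FC1' by simp
  next
    case False
    hence jlt: "j < k" using j1 by simp
    define l where "l = S j"
    have l: "1 \<le> l" "l < m" "\<not> linked (dyck_word p (3*m)) l" using FC2'[OF j1(1) jlt] l_def D_def by auto
    have rl: "r < l" using r(3) l_def by simp
    have sub: "(\<lambda>q. al p (Bs ! q)) ` {l..<m} \<subseteq> {1..<a}"
    proof
      fix y assume "y \<in> (\<lambda>q. al p (Bs ! q)) ` {l..<m}"
      then obtain q' where q': "q' \<in> {l..<m}" "y = al p (Bs ! q')" by auto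
      have "al p (Bs ! q') < al p (Bs ! r)"
        using cut_lemma[OF perm oc av nm l rl, of q'] q' Bs_def by simp
      moreover have "1 \<le> al p (Bs ! q')" using alA q' by auto
      ultimately show "y \<in> {1..<a}" using q' r(1) a_def by simp
    qed
    have "card {l..<m} \<le> card {1..<a}"
      by (rule card_inj_on_le[OF inj_on_subset[OF injal] sub]) auto
    thus ?thesis using l_def by simp
  qed
  have up: "S (j - 1) \<le> m - a"
  proof (cases "j = 1")
    case True thus ?thesis unfolding S_def by simp
  next
    case False
    hence jj: "1 \<le> j - 1" "j - 1 < k" using j1 by auto
    define l where "l = S (j - 1)"
    have l: "1 \<le> l" "l < m" "\<not> linked (dyck_word p (3*m)) l" using FC2'[OF jj] l_def D_def by auto
    have rl: "l \<le> r" using r(2) l_def by simp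
    have sub: "(\<lambda>q. al p (Bs ! q)) ` {..<l} \<subseteq> {a<..m}"
    proof
      fix y assume "y \<in> (\<lambda>q. al p (Bs ! q)) ` {..<l}"
      then obtain q where q: "q < l" "y = al p (Bs ! q)" by auto
      have "al p (Bs ! r) < al p (Bs ! q)"
        using cut_lemma[OF perm oc av nm l q(1) rl rm] Bs_def by simp
      moreover have "al p (Bs ! q) \<le> m" using alA q l by auto
      ultimately show "y \<in> {a<..m}" using q r(1) a_def by simp
    qed
    have "card {..<l} \<le> card {a<..m}"
      by (rule card_inj_on_le[OF inj_on_subset[OF injal] sub]) (use l in auto)
    thus ?thesis using l_def by simp
  qed
  have "setA p (3*m) = {1..<Suc m}" using A_eq[OF perm oc av nm] by auto
  hence As: "sorted_list_of_set (setA p (3*m)) = [1..<Suc m]" by (simp only: sorted_list_of_set_range)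
  have Aa: "sorted_list_of_set (setA p (3*m)) ! (a - 1) = a" unfolding As using a1m
    by (simp add: nth_upt del: upt_Suc)
  have lowX: "sum_list (take (k - j + 1 - 1) (rev X)) = m - S j"
  proof -
    have "sum_list (take (k - j) (rev X)) = sum_list X - sum_list (take (length X - (k - j)) X)"
      by (rule sum_take_rev) (simp add: k_def)
    moreover have "length X - (k - j) = j" using j1 k_def by simp
    moreover have "sum_list X = m" using FC1' unfolding S_def k_def by simp
    ultimately show ?thesis unfolding S_def by simp
  qed
  have upX: "sum_list (take (k - j + 1) (rev X)) = m - S (j - 1)"
  proof -
    have "sum_list (take (k - j + 1) (rev X)) = sum_list X - sum_list (take (length X - (k - j + 1)) X)"
      by (rule sum_take_rev) (use j1 k_def in simp)
    moreover have "length X - (k - j + 1) = j - 1" using j1 k_def by simp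
    moreover have "sum_list X = m" using FC1' unfolding S_def k_def by simp
    ultimately show ?thesis unfolding S_def by simp
  qed
  have "m - S j \<le> a - 1 \<and> a - 1 < m - S (j - 1)" using low up a1m by simp
  thus "Min (cyc p b) \<in> block (setA p (3*m)) (rev X) (k - j + 1)"
    unfolding block_def aMin lowX upX using Aa by (metis (mono_tags, lifting) mem_Collect_eq)
qed

end
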